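(* Let $\Delta$ be a $(d-1)$-dimensional simplicial complex, $k$ a field and $s$ an integer. If $\Delta$ is $s$-Lefschetz over $k$, then the cone $\mathrm{cone}(\Delta)$ is also $s$-Lefschetz over $k$.
   Context: $\mathrm{cone}(\Delta)=\{F:F\in\Delta\}\cup\{F\cup\{v\}:F\in\Delta\}$ for a new vertex $v$. For a simplicial complex $\Gamma$ on vertex set $[n]$, $k[\Gamma]=k[x_1,\dots,x_n]/I_\Gamma$ is its Stanley–Reisner ring. A degree-one element $\omega$ is an $s$-Lefschetz element for $k[\Gamma]/\Theta$ ($\Theta$ a maximal linear system of parameters of $k[\Gamma]$) if $\omega^{s-2i}:(k[\Gamma]/\Theta)_i\to(k[\Gamma]/\Theta)_{s-i}$ is injective for all $0\le i\le\lfloor(s-1)/2\rfloor$; $\Gamma$ is $s$-Lefschetz over $k$ if such a pair $(\Theta,\omega)$ exists. *)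

theory Defs
  imports Main "HOL-Library.Poly_Mapping"
begin

text \<open>Polynomials in variables indexed by nat over a field: monomials are
finitely supported exponent vectors, polynomials finitely supported coefficient maps.\<close>

type_synonym 'k mpoly = "(nat \<Rightarrow>\<^sub>0 nat) \<Rightarrow>\<^sub>0 'k"

definition mdeg :: "(nat \<Rightarrow>\<^sub>0 nat) \<Rightarrow> nat" where
  "mdeg m = (\<Sum>j\<in>Poly_Mapping.keys m. Poly_Mapping.lookup m j)"

definition polyring :: "'k itself \<Rightarrow> nat set \<Rightarrow> ('k::field) mpoly set" where
  "polyring _ V = {f. \<forall>m\<in>Poly_Mapping.keys f. Poly_Mapping.keys m \<subseteq> V}"

definition homog :: "nat \<Rightarrow> ('k::field) mpoly \<Rightarrow> bool" where
  "homog i f \<longleftrightarrow> (\<forall>m\<in>Poly_Mapping.keys f. mdeg m = i)"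

definition var :: "nat \<Rightarrow> ('k::field) mpoly" where
  "var j = Poly_Mapping.single (Poly_Mapping.single j 1) 1"

definition monom :: "(nat \<Rightarrow>\<^sub>0 nat) \<Rightarrow> ('k::field) mpoly" where
  "monom m = Poly_Mapping.single m 1"

definition ideal_in :: "nat set \<Rightarrow> ('k::field) mpoly set \<Rightarrow> 'k mpoly set" where
  "ideal_in V G = {f. \<exists>S c. finite S \<and> S \<subseteq> G \<and> (\<forall>g\<in>S. c g \<in> polyring TYPE('k) V)
                       \<and> f = (\<Sum>g\<in>S. c g * g)}"

definition simplicial_complex :: "nat set \<Rightarrow> nat set set \<Rightarrow> bool" where
  "simplicial_complex V \<Delta> \<longleftrightarrow> finite V \<and> {} \<in> \<Delta> \<and> (\<forall>F\<in>\<Delta>. F \<subseteq> V)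
      \<and> (\<forall>F\<in>\<Delta>. \<forall>G. G \<subseteq> F \<longrightarrow> G \<in> \<Delta>)"

text \<open>dimension + 1 (= Krull dimension of the Stanley--Reisner ring)\<close>
definition dimp1 :: "nat set set \<Rightarrow> nat" where
  "dimp1 \<Delta> = Max (card ` \<Delta>)"

definition cone :: "nat \<Rightarrow> nat set set \<Rightarrow> nat set set" where
  "cone v \<Delta> = \<Delta> \<union> {insert v F | F. F \<in> \<Delta>}"

definition SR_gens :: "nat set \<Rightarrow> nat set set \<Rightarrow> ('k::field) mpoly set" where
  "SR_gens V \<Delta> = {(\<Prod>j\<in>F. var j) | F. F \<subseteq> V \<and> F \<notin> \<Delta>}"

definition linear_form :: "nat set \<Rightarrow> ('k::field) mpoly \<Rightarrow> bool" where
  "linear_form V f \<longleftrightarrow> f \<in> polyring TYPE('k) V \<and> homog 1 f"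

text \<open>The ideal I_Delta + (Theta); k[Delta]/Theta is the quotient by it.\<close>
definition SR_Theta :: "nat set \<Rightarrow> nat set set \<Rightarrow> ('k::field) mpoly list \<Rightarrow> 'k mpoly set" where
  "SR_Theta V \<Delta> \<Theta> = ideal_in V (SR_gens V \<Delta> \<union> set \<Theta>)"

text \<open>Maximal linear system of parameters: dim+1 linear forms such that
k[Delta]/Theta is finite dimensional (all monomials of large degree vanish).\<close>
definition lsop :: "nat set \<Rightarrow> nat set set \<Rightarrow> ('k::field) mpoly list \<Rightarrow> bool" where
  "lsop V \<Delta> \<Theta> \<longleftrightarrow> length \<Theta> = dimp1 \<Delta> \<and> (\<forall>\<theta>\<in>set \<Theta>. linear_form V \<theta>)
     \<and> (\<exists>N. \<forall>m. Poly_Mapping.keys m \<subseteq> V \<and> mdeg m \<ge> N \<longrightarrow> monom m \<in> SR_Theta V \<Delta> \<Theta>)"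

text \<open>omega^(s-2i) : (k[Delta]/Theta)_i \<rightarrow> (k[Delta]/Theta)_(s-i) injective for
0 \<le> i \<le> floor((s-1)/2); injectivity on the quotient unfolded.\<close>
definition lefschetz_element :: "nat set \<Rightarrow> nat set set \<Rightarrow> int \<Rightarrow> ('k::field) mpoly list \<Rightarrow> 'k mpoly \<Rightarrow> bool" where
  "lefschetz_element V \<Delta> s \<Theta> \<omega> \<longleftrightarrow> linear_form V \<omega> \<and>
     (\<forall>i::nat. int i \<le> (s - 1) div 2 \<longrightarrow>
        (\<forall>f\<in>polyring TYPE('k) V. homog i f \<longrightarrow>
            \<omega> ^ nat (s - 2 * int i) * f \<in> SR_Theta V \<Delta> \<Theta> \<longrightarrow> f \<in> SR_Theta V \<Delta> \<Theta>))"

definition s_lefschetz :: "'k::field itself \<Rightarrow> nat set \<Rightarrow> nat set set \<Rightarrow> int \<Rightarrow> bool" where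
  "s_lefschetz _ V \<Delta> s \<longleftrightarrow>
     (\<exists>(\<Theta>::'k mpoly list) \<omega>. lsop V \<Delta> \<Theta> \<and> lefschetz_element V \<Delta> s \<Theta> \<omega>)"

end

theory Submission imports Defs begin

definition phi :: "nat \<Rightarrow> ('k::field) mpoly \<Rightarrow> 'k mpoly" where
  "phi v f = Abs_poly_mapping (\<lambda>m. Poly_Mapping.lookup f m when Poly_Mapping.lookup m v = 0)"

lemma lookup_phi: "Poly_Mapping.lookup (phi v f) m = (Poly_Mapping.lookup f m when Poly_Mapping.lookup m v = 0)"
proof -
  have "{m. (Poly_Mapping.lookup f m when Poly_Mapping.lookup m v = 0) \<noteq> 0} \<subseteq> {m. Poly_Mapping.lookup f m \<noteq> 0}"
    by auto
  hence "finite {m. (Poly_Mapping.lookup f m when Poly_Mapping.lookup m v = 0) \<noteq> 0}"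
    using finite_subset finite_lookup by blast
  thus ?thesis unfolding phi_def by simp
qed

lemma phi_add: "phi v (f + g) = phi v f + phi v g"
  by (rule poly_mapping_eqI) (simp add: lookup_phi lookup_add when_add_distrib)

lemma phi_zero: "phi v 0 = 0"
  by (rule poly_mapping_eqI) (simp add: lookup_phi)

lemma phi_sum: "phi v (sum g S) = (\<Sum>x\<in>S. phi v (g x))"
  by (induction S rule: infinite_finite_induct) (auto simp: phi_zero phi_add)

lemma Sum_any_zeroI: "(\<And>a. g a = 0) \<Longrightarrow> Sum_any g = 0"
proof -
  assume "\<And>a. g a = 0"
  hence "g = (\<lambda>_. 0)" by auto
  thus ?thesis by simp
qed

lemma phi_mult: "phi v (f * g) = phi v f * phi v g"
proof (rule poly_mapping_eqI)
  fix k
  show "Poly_Mapping.lookup (phi v (f * g)) k = Poly_Mapping.lookup (phi v f * phi v g) k"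
  proof (cases "Poly_Mapping.lookup k v = 0")
    case True
    have "(\<Sum>l. Poly_Mapping.lookup f l * (\<Sum>q. Poly_Mapping.lookup g q when k = l + q))
       = (\<Sum>l. Poly_Mapping.lookup (phi v f) l * (\<Sum>q. Poly_Mapping.lookup (phi v g) q when k = l + q))"
    proof (rule Sum_any.cong)
      fix l
      show "Poly_Mapping.lookup f l * (\<Sum>q. Poly_Mapping.lookup g q when k = l + q)
         = Poly_Mapping.lookup (phi v f) l * (\<Sum>q. Poly_Mapping.lookup (phi v g) q when k = l + q)"
      proof (cases "Poly_Mapping.lookup l v = 0")
        case True
        have "(\<Sum>q. Poly_Mapping.lookup g q when k = l + q) = (\<Sum>q. Poly_Mapping.lookup (phi v g) q when k = l + q)"
          by (rule Sum_any.cong) (use \<open>Poly_Mapping.lookup k v = 0\<close> in \<open>auto simp: lookup_phi lookup_add when_def\<close>)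
        with True show ?thesis by (simp add: lookup_phi)
      next
        case False
        have "(\<Sum>q. Poly_Mapping.lookup g q when k = l + q) = 0"
          by (rule Sum_any_zeroI) (use False \<open>Poly_Mapping.lookup k v = 0\<close> in \<open>auto simp: lookup_add when_def\<close>)
        moreover have "(\<Sum>q. Poly_Mapping.lookup (phi v g) q when k = l + q) = 0"
          by (rule Sum_any_zeroI) (use False \<open>Poly_Mapping.lookup k v = 0\<close> in \<open>auto simp: lookup_add when_def\<close>)
        ultimately show ?thesis by simp
      qed
    qed
    thus ?thesis using True by (simp add: lookup_phi lookup_mult)
  next
    case False
    have "(\<Sum>l. Poly_Mapping.lookup (phi v f) l * (\<Sum>q. Poly_Mapping.lookup (phi v g) q when k = l + q)) = 0"
    proof (rule Sum_any_zeroI)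
      fix l
      show "Poly_Mapping.lookup (phi v f) l * (\<Sum>q. Poly_Mapping.lookup (phi v g) q when k = l + q) = 0"
      proof (cases "Poly_Mapping.lookup l v = 0")
        case True
        have "(\<Sum>q. Poly_Mapping.lookup (phi v g) q when k = l + q) = 0"
          by (rule Sum_any_zeroI) (use True False in \<open>auto simp: lookup_add lookup_phi when_def\<close>)
        thus ?thesis by simp
      qed (simp add: lookup_phi)
    qed
    thus ?thesis using False by (simp add: lookup_phi lookup_mult)
  qed
qed

lemma phi_one: "phi v 1 = 1"
  by (rule poly_mapping_eqI) (simp add: lookup_phi lookup_one when_def)

lemma phi_prod: "phi v (prod g S) = (\<Prod>x\<in>S. phi v (g x))"
  by (induction S rule: infinite_finite_induct) (auto simp: phi_one phi_mult)

lemma phi_power: "phi v (f ^ n) = phi v f ^ n"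
  by (induction n) (auto simp: phi_one phi_mult)

lemma lookup_var: "Poly_Mapping.lookup (var j) m = (1 when m = Poly_Mapping.single j 1)"
  by (auto simp: var_def lookup_single when_def)

lemma phi_var_v: "phi v (var v) = 0"
  by (rule poly_mapping_eqI) (auto simp: lookup_phi lookup_var when_def)

lemma phi_var_other: "j \<noteq> v \<Longrightarrow> phi v (var j) = var j"
  by (rule poly_mapping_eqI) (auto simp: lookup_phi lookup_var when_def lookup_single)

lemma keys_phi: "Poly_Mapping.keys (phi v f) \<subseteq> Poly_Mapping.keys f"
  by (auto simp: in_keys_iff lookup_phi)

lemma phi_id: "(\<And>m. m \<in> Poly_Mapping.keys f \<Longrightarrow> Poly_Mapping.lookup m v = 0) \<Longrightarrow> phi v f = f"
  by (rule poly_mapping_eqI) (fastforce simp: lookup_phi when_def in_keys_iff)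

definition quo :: "nat \<Rightarrow> ('k::field) mpoly \<Rightarrow> 'k mpoly" where
  "quo v f = Abs_poly_mapping (\<lambda>m. Poly_Mapping.lookup f (m + Poly_Mapping.single v 1))"

lemma lookup_quo: "Poly_Mapping.lookup (quo v f) m = Poly_Mapping.lookup f (m + Poly_Mapping.single v 1)"
proof -
  have "{m. Poly_Mapping.lookup f (m + Poly_Mapping.single v 1) \<noteq> 0}
      = (\<lambda>m. m + Poly_Mapping.single v 1) -` {m. Poly_Mapping.lookup f m \<noteq> 0}" by auto
  moreover have "finite ((\<lambda>m. m + Poly_Mapping.single v 1) -` {m. Poly_Mapping.lookup f m \<noteq> 0})"
    by (rule finite_vimageI) (auto simp: inj_on_def)
  ultimately show ?thesis unfolding quo_def by simp
qed

lemma decomp: "f = phi v f + var v * quo v f"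
proof (rule poly_mapping_eqI)
  fix k
  have "Poly_Mapping.lookup (var v * quo v f) k
      = (\<Sum>q. Poly_Mapping.lookup (quo v f) q when k = Poly_Mapping.single v 1 + q)"
    by (simp add: lookup_mult lookup_var when_mult)
  also have "\<dots> = (Poly_Mapping.lookup f k when Poly_Mapping.lookup k v \<noteq> 0)"
  proof (cases "Poly_Mapping.lookup k v = 0")
    case True
    have "(\<Sum>q. Poly_Mapping.lookup (quo v f) q when k = Poly_Mapping.single v 1 + q) = 0"
      by (rule Sum_any_zeroI) (use True in \<open>auto simp: lookup_add when_def\<close>)
    thus ?thesis using True by simp
  next
    case False
    have eq: "(k - Poly_Mapping.single v 1) + Poly_Mapping.single v 1 = k"
      by (rule poly_mapping_eqI) (use False in \<open>auto simp: lookup_add lookup_minus lookup_single when_def\<close>)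
    have "(\<Sum>q. Poly_Mapping.lookup (quo v f) q when k = Poly_Mapping.single v 1 + q)
        = (\<Sum>q. Poly_Mapping.lookup (quo v f) q when q = k - Poly_Mapping.single v 1)"
    proof (rule Sum_any.cong)
      fix q
      have "k = Poly_Mapping.single v 1 + q \<longleftrightarrow> q = k - Poly_Mapping.single v 1"
        using eq by (metis add.commute add_diff_cancel_left')
      thus "(Poly_Mapping.lookup (quo v f) q when k = Poly_Mapping.single v 1 + q)
        = (Poly_Mapping.lookup (quo v f) q when q = k - Poly_Mapping.single v 1)" by simp
    qed
    also have "\<dots> = Poly_Mapping.lookup f k" using eq by (simp add: lookup_quo)
    finally show ?thesis using False by simp
  qed
  finally show "Poly_Mapping.lookup f k = Poly_Mapping.lookup (phi v f + var v * quo v f) k"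
    by (simp add: lookup_add lookup_phi when_def)
qed

lemma polyring_mono: "V \<subseteq> W \<Longrightarrow> polyring T V \<subseteq> polyring T W"
  by (auto simp: polyring_def)

lemma polyring_zero: "0 \<in> polyring T V"
  by (simp add: polyring_def)

lemma polyring_one: "1 \<in> polyring T V"
  by (simp add: polyring_def)

lemma polyring_add: "f \<in> polyring T V \<Longrightarrow> g \<in> polyring T V \<Longrightarrow> f + g \<in> polyring T V"
proof -
  assume a: "f \<in> polyring T V" "g \<in> polyring T V"
  show ?thesis unfolding polyring_def
  proof (intro CollectI ballI)
    fix m assume "m \<in> Poly_Mapping.keys (f + g)"
    hence "m \<in> Poly_Mapping.keys f \<union> Poly_Mapping.keys g" by (rule subsetD[OF keys_add])
    thus "Poly_Mapping.keys m \<subseteq> V" using a unfolding polyring_def by auto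
  qed
qed

lemma keys_plus_nat: "Poly_Mapping.keys ((a::nat \<Rightarrow>\<^sub>0 nat) + b) = Poly_Mapping.keys a \<union> Poly_Mapping.keys b"
  by (auto simp: in_keys_iff lookup_add)

lemma polyring_mult: "f \<in> polyring T V \<Longrightarrow> g \<in> polyring T V \<Longrightarrow> f * g \<in> polyring T V"
  unfolding polyring_def using keys_mult[of f g] by (fastforce simp: keys_plus_nat)

lemma polyring_prod: "(\<And>x. x \<in> S \<Longrightarrow> g x \<in> polyring T V) \<Longrightarrow> prod g S \<in> polyring T V"
  by (induction S rule: infinite_finite_induct) (auto simp: polyring_one polyring_mult)

lemma keys_single_sv: "Poly_Mapping.keys (Poly_Mapping.single (v::nat) (1::nat)) = {v}"
  by simp

lemma var_polyring: "j \<in> V \<Longrightarrow> (var j :: 'k::field mpoly) \<in> polyring TYPE('k) V"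
  by (simp add: polyring_def var_def)

lemma quo_polyring: "f \<in> polyring T W \<Longrightarrow> quo v f \<in> polyring T W"
proof -
  assume a: "f \<in> polyring T W"
  show ?thesis unfolding polyring_def
  proof (intro CollectI ballI)
    fix m assume "m \<in> Poly_Mapping.keys (quo v f)"
    hence "m + Poly_Mapping.single v 1 \<in> Poly_Mapping.keys f" by (simp add: in_keys_iff lookup_quo)
    hence "Poly_Mapping.keys (m + Poly_Mapping.single v 1) \<subseteq> W" using a unfolding polyring_def by blast
    thus "Poly_Mapping.keys m \<subseteq> W" by (simp add: keys_plus_nat)
  qed
qed

lemma phi_polyring: "f \<in> polyring T W \<Longrightarrow> phi v f \<in> polyring T (W - {v})"
proof -
  assume a: "f \<in> polyring T W"
  show ?thesis unfolding polyring_def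
  proof (intro CollectI ballI)
    fix m assume "m \<in> Poly_Mapping.keys (phi v f)"
    hence 1: "m \<in> Poly_Mapping.keys f" and 2: "Poly_Mapping.lookup m v = 0"
      by (simp_all add: in_keys_iff lookup_phi when_def split: if_splits)
    from 1 have "Poly_Mapping.keys m \<subseteq> W" using a unfolding polyring_def by blast
    moreover from 2 have "v \<notin> Poly_Mapping.keys m" by (simp add: in_keys_iff)
    ultimately show "Poly_Mapping.keys m \<subseteq> W - {v}" by blast
  qed
qed

lemma homog_phi: "homog i f \<Longrightarrow> homog i (phi v f)"
  using keys_phi unfolding homog_def by blast

lemma ideal_zero: "0 \<in> ideal_in V G"
  unfolding ideal_in_def by (intro CollectI exI[of _ "{}"] exI[of _ "\<lambda>_. 0"] conjI) auto

lemma ideal_gen: "p \<in> polyring TYPE('k) V \<Longrightarrow> g \<in> G \<Longrightarrow> p * g \<in> ideal_in V (G :: ('k::field) mpoly set)"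
  unfolding ideal_in_def by (intro CollectI exI[of _ "{g}"] exI[of _ "\<lambda>_. p"] conjI) auto

lemma ideal_add:
  assumes "f \<in> ideal_in V G" "g \<in> ideal_in V (G :: ('k::field) mpoly set)"
  shows "f + g \<in> ideal_in V G"
proof -
  obtain S1 c1 where 1: "finite S1" "S1 \<subseteq> G" "\<forall>x\<in>S1. c1 x \<in> polyring TYPE('k) V" "f = (\<Sum>x\<in>S1. c1 x * x)"
    using assms(1) unfolding ideal_in_def by blast
  obtain S2 c2 where 2: "finite S2" "S2 \<subseteq> G" "\<forall>x\<in>S2. c2 x \<in> polyring TYPE('k) V" "g = (\<Sum>x\<in>S2. c2 x * x)"
    using assms(2) unfolding ideal_in_def by blast
  define c where "c x = (if x \<in> S1 then c1 x else 0) + (if x \<in> S2 then c2 x else 0)" for x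
  have e1: "(\<Sum>x\<in>S1 \<union> S2. (if x \<in> S1 then c1 x else 0) * x) = f"
  proof -
    have "(\<Sum>x\<in>S1 \<union> S2. (if x \<in> S1 then c1 x else 0) * x) = (\<Sum>x\<in>S1 \<union> S2. (if x \<in> S1 then c1 x * x else 0))"
      by (rule sum.cong) auto
    also have "\<dots> = sum (\<lambda>x. c1 x * x) ((S1 \<union> S2) \<inter> S1)"
      using 1(1) 2(1) by (simp only: sum.inter_restrict finite_Un)
    also have "(S1 \<union> S2) \<inter> S1 = S1" by blast
    finally show ?thesis using 1(4) by simp
  qed
  have e2: "(\<Sum>x\<in>S1 \<union> S2. (if x \<in> S2 then c2 x else 0) * x) = g"
  proof -
    have "(\<Sum>x\<in>S1 \<union> S2. (if x \<in> S2 then c2 x else 0) * x) = (\<Sum>x\<in>S1 \<union> S2. (if x \<in> S2 then c2 x * x else 0))"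
      by (rule sum.cong) auto
    also have "\<dots> = sum (\<lambda>x. c2 x * x) ((S1 \<union> S2) \<inter> S2)"
      using 1(1) 2(1) by (simp only: sum.inter_restrict finite_Un)
    also have "(S1 \<union> S2) \<inter> S2 = S2" by blast
    finally show ?thesis using 2(4) by simp
  qed
  have "(\<Sum>x\<in>S1 \<union> S2. c x * x) = (\<Sum>x\<in>S1 \<union> S2. (if x \<in> S1 then c1 x else 0) * x)
      + (\<Sum>x\<in>S1 \<union> S2. (if x \<in> S2 then c2 x else 0) * x)"
    unfolding c_def distrib_right by (rule sum.distrib)
  also have "\<dots> = f + g" using e1 e2 by simp
  finally have "f + g = (\<Sum>x\<in>S1 \<union> S2. c x * x)" by simp
  moreover have "\<forall>x\<in>S1 \<union> S2. c x \<in> polyring TYPE('k) V"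
    using 1 2 by (auto simp: c_def polyring_add polyring_zero)
  ultimately show ?thesis unfolding ideal_in_def
    by (intro CollectI exI[of _ "S1 \<union> S2"] exI[of _ c] conjI) (use 1 2 in auto)
qed

lemma ideal_sum: "(\<And>x. x \<in> S \<Longrightarrow> h x \<in> ideal_in V G) \<Longrightarrow> sum h S \<in> ideal_in V G"
proof (induction S rule: infinite_finite_induct)
  case (infinite A) thus ?case by (simp add: ideal_zero)
next
  case empty thus ?case by (simp add: ideal_zero)
next
  case (insert x F)
  hence "h x \<in> ideal_in V G" "sum h F \<in> ideal_in V G" by auto
  thus ?case using insert(1,2) by (simp add: ideal_add)
qed

lemma ideal_mono: "V \<subseteq> W \<Longrightarrow> G \<subseteq> H \<Longrightarrow> ideal_in V G \<subseteq> ideal_in W H"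
proof
  assume a: "V \<subseteq> W" "G \<subseteq> H"
  fix f assume "f \<in> ideal_in V G"
  then obtain S c where 1: "finite S" "S \<subseteq> G" "\<forall>x\<in>S. c x \<in> polyring TYPE('a) V" "f = (\<Sum>x\<in>S. c x * x)"
    unfolding ideal_in_def by blast
  have "\<forall>x\<in>S. c x \<in> polyring TYPE('a) W" using 1(3) polyring_mono[OF a(1)] by blast
  thus "f \<in> ideal_in W H" unfolding ideal_in_def
    by (intro CollectI exI[of _ S] exI[of _ c] conjI) (use 1 a in auto)
qed

lemma phi_id_polyring:
  assumes "f \<in> polyring T V" "v \<notin> V"
  shows "phi v f = f"
proof (rule phi_id)
  fix m assume "m \<in> Poly_Mapping.keys f"
  hence "Poly_Mapping.keys m \<subseteq> V" using assms(1) unfolding polyring_def by blast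
  hence "v \<notin> Poly_Mapping.keys m" using assms(2) by blast
  thus "Poly_Mapping.lookup m v = 0" by (simp add: not_in_keys_iff_lookup_eq_zero)
qed

lemma phi_gen:
  assumes sc: "simplicial_complex V \<Delta>" and v: "v \<notin> V"
    and lf: "\<forall>\<theta>\<in>set \<Theta>. linear_form V \<theta>"
    and g: "g \<in> SR_gens (insert v V) (cone v \<Delta>) \<union> set (\<Theta> @ [var v :: ('k::field) mpoly])"
  shows "phi v g = 0 \<or> phi v g \<in> SR_gens V \<Delta> \<union> set \<Theta>"
proof -
  have finV: "finite V" using sc unfolding simplicial_complex_def by blast
  consider (gen) F where "g = (\<Prod>j\<in>F. var j)" "F \<subseteq> insert v V" "F \<notin> cone v \<Delta>"
    | (th) "g \<in> set \<Theta>" | (vv) "g = var v"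
    using g unfolding SR_gens_def by auto
  thus ?thesis
  proof cases
    case gen
    have finF: "finite F" using gen(2) finV finite_subset by blast
    have pg: "phi v g = (\<Prod>j\<in>F. phi v (var j))" using gen(1) by (simp add: phi_prod)
    show ?thesis
    proof (cases "v \<in> F")
      case True
      have "(\<Prod>j\<in>F. phi v (var j)) = phi v (var v) * (\<Prod>j\<in>F - {v}. phi v (var j))"
        using finF True by (simp add: prod.remove)
      hence "phi v g = 0" using pg by (simp add: phi_var_v)
      thus ?thesis by blast
    next
      case False
      have "(\<Prod>j\<in>F. phi v (var j)) = (\<Prod>j\<in>F. var j :: 'k mpoly)"
        using False by (intro prod.cong) (auto intro: phi_var_other)
      moreover have "F \<subseteq> V" using gen(2) False by blast
      moreover have "F \<notin> \<Delta>" using gen(3) unfolding cone_def by blast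
      ultimately have "phi v g \<in> SR_gens V \<Delta>" using pg unfolding SR_gens_def by auto
      thus ?thesis by blast
    qed
  next
    case th
    hence "g \<in> polyring TYPE('k) V" using lf unfolding linear_form_def by blast
    hence "phi v g = g" using v by (rule phi_id_polyring)
    thus ?thesis using th by simp
  next
    case vv thus ?thesis by (simp add: phi_var_v)
  qed
qed

lemma phi_ideal:
  assumes sc: "simplicial_complex V \<Delta>" and v: "v \<notin> V"
    and lf: "\<forall>\<theta>\<in>set \<Theta>. linear_form V \<theta>"
    and f: "f \<in> SR_Theta (insert v V) (cone v \<Delta>) (\<Theta> @ [var v :: ('k::field) mpoly])"
  shows "phi v f \<in> SR_Theta V \<Delta> \<Theta>"
proof -
  obtain S c where 1: "finite S" "S \<subseteq> SR_gens (insert v V) (cone v \<Delta>) \<union> set (\<Theta> @ [var v])"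
      "\<forall>x\<in>S. c x \<in> polyring TYPE('k) (insert v V)" "f = (\<Sum>x\<in>S. c x * x)"
    using f unfolding SR_Theta_def ideal_in_def by blast
  have "phi v f = (\<Sum>x\<in>S. phi v (c x) * phi v x)" using 1(4) by (simp add: phi_sum phi_mult)
  also have "\<dots> \<in> SR_Theta V \<Delta> \<Theta>" unfolding SR_Theta_def
  proof (rule ideal_sum)
    fix x assume x: "x \<in> S"
    have "phi v (c x) \<in> polyring TYPE('k) (insert v V - {v})" using 1(3) x phi_polyring by blast
    moreover have "insert v V - {v} = V" using v by blast
    ultimately have pc: "phi v (c x) \<in> polyring TYPE('k) V" by simp
    have "phi v x = 0 \<or> phi v x \<in> SR_gens V \<Delta> \<union> set \<Theta>"
      using phi_gen[OF sc v lf] 1(2) x by blast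
    thus "phi v (c x) * phi v x \<in> ideal_in V (SR_gens V \<Delta> \<union> set \<Theta>)"
      using pc by (auto simp: ideal_zero ideal_gen)
  qed
  finally show ?thesis .
qed

lemma SR_mono:
  assumes v: "v \<notin> V"
  shows "SR_Theta V \<Delta> \<Theta> \<subseteq> SR_Theta (insert v V) (cone v \<Delta>) (\<Theta> @ [var v :: ('k::field) mpoly])"
  unfolding SR_Theta_def
proof (rule ideal_mono)
  show "SR_gens V \<Delta> \<union> set \<Theta> \<subseteq> SR_gens (insert v V) (cone v \<Delta>) \<union> set (\<Theta> @ [var v :: 'k mpoly])"
  proof -
    have "SR_gens V \<Delta> \<subseteq> (SR_gens (insert v V) (cone v \<Delta>) :: 'k mpoly set)"
    proof
      fix g :: "'k mpoly" assume "g \<in> SR_gens V \<Delta>"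
      then obtain F where F: "g = (\<Prod>j\<in>F. var j)" "F \<subseteq> V" "F \<notin> \<Delta>" unfolding SR_gens_def by blast
      have "F \<notin> cone v \<Delta>" using F v unfolding cone_def by blast
      thus "g \<in> SR_gens (insert v V) (cone v \<Delta>)" using F unfolding SR_gens_def by blast
    qed
    thus ?thesis by auto
  qed
qed blast

lemma var_v_ideal:
  assumes "q \<in> polyring TYPE('k) (insert v V)"
  shows "var v * q \<in> SR_Theta (insert v V) (cone v \<Delta>) (\<Theta> @ [var v :: ('k::field) mpoly])"
  unfolding SR_Theta_def using ideal_gen[OF assms, of "var v"] by (simp add: mult.commute)

lemma dimp1_cone:
  assumes sc: "simplicial_complex V \<Delta>" and v: "v \<notin> V"
  shows "dimp1 (cone v \<Delta>) = Suc (dimp1 \<Delta>)"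
proof -
  have finV: "finite V" and sub: "\<forall>F\<in>\<Delta>. F \<subseteq> V" and ne: "{} \<in> \<Delta>"
    using sc unfolding simplicial_complex_def by blast+
  have finD: "finite \<Delta>" using sub finV by (meson Pow_iff finite_Pow_iff finite_subset subsetI)
  have cins: "card (insert v F) = Suc (card F)" if "F \<in> \<Delta>" for F
    using that sub finV v by (meson card_insert_disjoint finite_subset subsetD)
  define M where "M = Max (card ` \<Delta>)"
  have M1: "card F \<le> M" if "F \<in> \<Delta>" for F using that finD unfolding M_def by simp
  have "M \<in> card ` \<Delta>" unfolding M_def using finD ne by (intro Max_in) auto
  then obtain F0 where F0: "F0 \<in> \<Delta>" "card F0 = M" by auto
  have "card ` cone v \<Delta> = card ` \<Delta> \<union> (\<lambda>F. card (insert v F)) ` \<Delta>"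
    unfolding cone_def by auto
  have "Max (card ` cone v \<Delta>) = Suc M"
  proof (rule Max_eqI)
    show "finite (card ` cone v \<Delta>)" using finD unfolding cone_def by auto
  next
    fix y assume "y \<in> card ` cone v \<Delta>"
    then obtain F where "F \<in> \<Delta>" "y = card F \<or> y = card (insert v F)" unfolding cone_def by auto
    thus "y \<le> Suc M" using M1 cins by fastforce
  next
    have "insert v F0 \<in> cone v \<Delta>" using F0 unfolding cone_def by auto
    thus "Suc M \<in> card ` cone v \<Delta>" using cins[OF F0(1)] F0(2) by force
  qed
  thus ?thesis unfolding dimp1_def M_def .
qed

lemma var_v_linear: "linear_form (insert v V) (var v :: ('k::field) mpoly)"
  unfolding linear_form_def homog_def mdeg_def by (simp add: polyring_def var_def)

lemma linear_form_mono: "V \<subseteq> W \<Longrightarrow> linear_form V f \<Longrightarrow> linear_form W f"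
  unfolding linear_form_def using polyring_mono by blast

lemma monom_polyring: "Poly_Mapping.keys m \<subseteq> V \<Longrightarrow> (monom m :: ('k::field) mpoly) \<in> polyring TYPE('k) V"
  by (simp add: polyring_def monom_def)

theorem lemma2p1:
  fixes V :: "nat set" and \<Delta> :: "nat set set" and d :: nat and s :: int and v :: nat
  assumes "simplicial_complex V \<Delta>"
    and "dimp1 \<Delta> = d"
    and "v \<notin> V"
    and "s_lefschetz TYPE('k::field) V \<Delta> s"
  shows "s_lefschetz TYPE('k) (insert v V) (cone v \<Delta>) s"
proof -
  note sc = assms(1) and v = assms(3)
  obtain \<Theta> :: "'k mpoly list" and \<omega> where ls: "lsop V \<Delta> \<Theta>" and le: "lefschetz_element V \<Delta> s \<Theta> \<omega>"
    using assms(4) unfolding s_lefschetz_def by blast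
  define \<Theta>' where "\<Theta>' = \<Theta> @ [var v]"
  have lf: "\<forall>\<theta>\<in>set \<Theta>. linear_form V \<theta>" using ls unfolding lsop_def by blast
  obtain N where N: "\<forall>m. Poly_Mapping.keys m \<subseteq> V \<and> mdeg m \<ge> N \<longrightarrow> monom m \<in> SR_Theta V \<Delta> \<Theta>"
    using ls unfolding lsop_def by blast
  have sub: "SR_Theta V \<Delta> \<Theta> \<subseteq> SR_Theta (insert v V) (cone v \<Delta>) \<Theta>'"
    unfolding \<Theta>'_def by (rule SR_mono[OF v])
  have lsop': "lsop (insert v V) (cone v \<Delta>) \<Theta>'"
    unfolding lsop_def
  proof (intro conjI)
    show "length \<Theta>' = dimp1 (cone v \<Delta>)"
      using ls dimp1_cone[OF sc v] unfolding lsop_def \<Theta>'_def by simp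
    show "\<forall>\<theta>\<in>set \<Theta>'. linear_form (insert v V) \<theta>"
      using lf var_v_linear linear_form_mono[of V "insert v V"] unfolding \<Theta>'_def by auto
    show "\<exists>N. \<forall>m. Poly_Mapping.keys m \<subseteq> insert v V \<and> N \<le> mdeg m \<longrightarrow>
        monom m \<in> SR_Theta (insert v V) (cone v \<Delta>) \<Theta>'"
    proof (intro exI allI impI)
      fix m :: "nat \<Rightarrow>\<^sub>0 nat"
      assume m: "Poly_Mapping.keys m \<subseteq> insert v V \<and> N \<le> mdeg m"
      have mp: "(monom m :: 'k mpoly) \<in> polyring TYPE('k) (insert v V)" using m monom_polyring by blast
      have dec: "(monom m :: 'k mpoly) = phi v (monom m) + var v * quo v (monom m)" by (rule decomp)
      have q: "var v * quo v (monom m :: 'k mpoly) \<in> SR_Theta (insert v V) (cone v \<Delta>) \<Theta>'"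
        unfolding \<Theta>'_def by (rule var_v_ideal, rule quo_polyring, rule mp)
      have p: "phi v (monom m :: 'k mpoly) \<in> SR_Theta (insert v V) (cone v \<Delta>) \<Theta>'"
      proof (cases "Poly_Mapping.lookup m v = 0")
        case True
        have "phi v (monom m :: 'k mpoly) = monom m"
          by (rule phi_id) (use True in \<open>simp add: monom_def\<close>)
        moreover have "Poly_Mapping.keys m \<subseteq> V" using m True by (auto simp: in_keys_iff)
        hence "(monom m :: 'k mpoly) \<in> SR_Theta V \<Delta> \<Theta>" using N m by blast
        ultimately show ?thesis using sub by auto
      next
        case False
        have "phi v (monom m :: 'k mpoly) = 0"
          by (rule poly_mapping_eqI) (use False in \<open>auto simp: lookup_phi monom_def lookup_single when_def\<close>)
        thus ?thesis unfolding SR_Theta_def by (simp add: ideal_zero)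
      qed
      show "monom m \<in> SR_Theta (insert v V) (cone v \<Delta>) \<Theta>'"
        using p q dec unfolding SR_Theta_def by (metis ideal_add)
    qed
  qed
  have le': "lefschetz_element (insert v V) (cone v \<Delta>) s \<Theta>' \<omega>"
    unfolding lefschetz_element_def
  proof (intro conjI allI impI ballI)
    have lw: "linear_form V \<omega>" using le unfolding lefschetz_element_def by blast
    thus "linear_form (insert v V) \<omega>" by (rule linear_form_mono[rotated]) blast
    have pw: "phi v \<omega> = \<omega>" using lw v unfolding linear_form_def by (intro phi_id_polyring) auto
    fix i :: nat and f :: "'k mpoly"
    assume i: "int i \<le> (s - 1) div 2" and f: "f \<in> polyring TYPE('k) (insert v V)" and h: "homog i f"
      and w: "\<omega> ^ nat (s - 2 * int i) * f \<in> SR_Theta (insert v V) (cone v \<Delta>) \<Theta>'"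
    have "phi v (\<omega> ^ nat (s - 2 * int i) * f) \<in> SR_Theta V \<Delta> \<Theta>"
      using phi_ideal[OF sc v lf] w unfolding \<Theta>'_def by blast
    hence w2: "\<omega> ^ nat (s - 2 * int i) * phi v f \<in> SR_Theta V \<Delta> \<Theta>"
      by (simp add: phi_mult phi_power pw)
    have "phi v f \<in> polyring TYPE('k) (insert v V - {v})" using f phi_polyring by blast
    moreover have "insert v V - {v} = V" using v by blast
    ultimately have pf: "phi v f \<in> polyring TYPE('k) V" by simp
    have hf: "homog i (phi v f)" using h by (rule homog_phi)
    have "phi v f \<in> SR_Theta V \<Delta> \<Theta>"
      using le i pf hf w2 unfolding lefschetz_element_def by blast
    hence p: "phi v f \<in> SR_Theta (insert v V) (cone v \<Delta>) \<Theta>'" using sub by blast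
    have q: "var v * quo v f \<in> SR_Theta (insert v V) (cone v \<Delta>) \<Theta>'"
      unfolding \<Theta>'_def by (rule var_v_ideal, rule quo_polyring, rule f)
    have "f = phi v f + var v * quo v f" by (rule decomp)
    thus "f \<in> SR_Theta (insert v V) (cone v \<Delta>) \<Theta>'"
      using p q unfolding SR_Theta_def by (metis ideal_add)
  qed
  show ?thesis unfolding s_lefschetz_def using lsop' le' by blast
qed

end
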